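(* Let $q$ be a prime power, $e\in\{1,2\}$, $r$ an integer ($r$ even if $e=1$, $r$ odd if $e=2$), and let $\mathcal S$ be a spread of the non-degenerate quadric $\mathcal Q_{r+2,e}$ of ${\rm PG}(r+2,q)$. If $K$ is a hyperplane of ${\rm PG}(r+2,q)$ such that $K\cap\mathcal Q_{r+2,e}$ is a non-degenerate quadric $\mathcal Q_{r+1,e-1}$ (hyperbolic if $e=1$, parabolic if $e=2$), then at most $q+1$ members of $\mathcal S$ are contained in $K$.
   Context: Notation: $\mathcal Q_{m,e}$ denotes a non-degenerate quadric of ${\rm PG}(m,q)$ which is hyperbolic $\mathcal Q^+(m,q)$ if $e=0$ ($m$ odd), parabolic $\mathcal Q(m,q)$ if $e=1$ ($m$ even), elliptic $\mathcal Q^-(m,q)$ if $e=2$ ($m$ odd). A generator of $\mathcal Q_{m,e}$ is a projective subspace of maximal dimension contained in it; generators are $\frac{m-e-1}{2}$-dimensional. A spread of $\mathcal Q_{m,e}$ is a set of $q^{\frac{m+e-1}{2}}+1$ pairwise disjoint generators. *)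

theory Defs
  imports "HOL-Analysis.Analysis"
begin

text \<open>Projective space PG(n,q) is modelled by the vector space 'a^'n over a finite
field 'a with q = CARD('a) and CARD('n) = n+1; projective subspaces of projective
dimension d are linear subspaces of vector dimension d+1.
A quadratic form is given by a coefficient matrix A: Q(x) = sum_i sum_j A_ij x_i x_j.\<close>

definition qform :: "'a::field^'n^'n \<Rightarrow> 'a^'n \<Rightarrow> 'a" where
  "qform A x = (\<Sum>i\<in>UNIV. \<Sum>j\<in>UNIV. A$i$j * x$i * x$j)"

definition polar :: "'a::field^'n^'n \<Rightarrow> 'a^'n \<Rightarrow> 'a^'n \<Rightarrow> 'a" where
  "polar A x y = qform A (x + y) - qform A x - qform A y"

definition nondeg_on :: "'a::field^'n^'n \<Rightarrow> ('a^'n) set \<Rightarrow> bool" where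
  "nondeg_on A W \<longleftrightarrow> vec.subspace W \<and>
     (\<forall>x\<in>W. x \<noteq> 0 \<and> qform A x = 0 \<longrightarrow> (\<exists>y\<in>W. polar A x y \<noteq> 0))"

definition in_quadric :: "'a::field^'n^'n \<Rightarrow> ('a^'n) set \<Rightarrow> bool" where
  "in_quadric A U \<longleftrightarrow> vec.subspace U \<and> (\<forall>x\<in>U. qform A x = 0)"

definition generator_on :: "'a::field^'n^'n \<Rightarrow> ('a^'n) set \<Rightarrow> ('a^'n) set \<Rightarrow> bool" where
  "generator_on A W U \<longleftrightarrow> U \<subseteq> W \<and> in_quadric A U \<and>
     (\<forall>V. V \<subseteq> W \<and> in_quadric A V \<longrightarrow> vec.dim V \<le> vec.dim U)"

text \<open>Q restricted to W (a subspace of projective dimension m) is the non-degenerate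
quadric Q_{m,e}: non-degenerate, and its generators have projective dimension (m-e-1)/2,
i.e. vector dimension (m+1-e)/2. (For m odd this separates hyperbolic e=0 from
elliptic e=2; for m even it is the parabolic case e=1.)\<close>
definition is_quadric :: "'a::field^'n^'n \<Rightarrow> ('a^'n) set \<Rightarrow> nat \<Rightarrow> nat \<Rightarrow> bool" where
  "is_quadric A W m e \<longleftrightarrow> vec.subspace W \<and> vec.dim W = m + 1 \<and> nondeg_on A W \<and>
     e \<le> m + 1 \<and> even (m + 1 - e) \<and>
     (\<exists>U. generator_on A W U \<and> vec.dim U = (m + 1 - e) div 2)"

definition is_spread :: "'a::{finite,field}^'n^'n \<Rightarrow> nat \<Rightarrow> nat \<Rightarrow> ('a^'n) set set \<Rightarrow> bool" where
  "is_spread A m e S \<longleftrightarrow>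
     (\<forall>U\<in>S. generator_on A UNIV U) \<and>
     (\<forall>U\<in>S. \<forall>V\<in>S. U \<noteq> V \<longrightarrow> U \<inter> V = {0}) \<and>
     card S = CARD('a) ^ ((m + e - 1) div 2) + 1"

end

theory Submission imports Defs begin

lemma card_span_indep:
  fixes B :: "('a::{finite,field}^'n) set"
  assumes "vec.independent B"
  shows "card (vec.span B) = CARD('a) ^ card B"
proof -
  have fB: "finite B" by simp
  let ?f = "\<lambda>c. \<Sum>v\<in>B. c v *s v"
  have inj: "inj_on ?f (PiE B (\<lambda>_. UNIV))"
  proof (rule inj_onI)
    fix c d assume c: "c \<in> PiE B (\<lambda>_. UNIV)" and d: "d \<in> PiE B (\<lambda>_. UNIV)" and eq: "?f c = ?f d"
    have sm: "(\<Sum>v\<in>B. (c v - d v) *s v) = 0"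
      using eq by (simp add: vector_sub_rdistrib sum_subtractf)
    have nd: "\<not> (\<exists>u. (\<exists>v\<in>B. u v \<noteq> 0) \<and> (\<Sum>v\<in>B. u v *s v) = 0)"
      using assms vec.dependent_finite[OF fB] by simp
    have "\<forall>v\<in>B. c v - d v = 0"
    proof (rule ccontr)
      assume "\<not> (\<forall>v\<in>B. c v - d v = 0)"
      hence "\<exists>u. (\<exists>v\<in>B. u v \<noteq> 0) \<and> (\<Sum>v\<in>B. u v *s v) = 0"
        using sm by (intro exI[of _ "\<lambda>v. c v - d v"]) simp
      thus False using nd by simp
    qed
    thus "c = d" using c d by (auto intro: PiE_ext)
  qed
  have img: "?f ` (PiE B (\<lambda>_. UNIV)) = vec.span B"
  proof
    show "?f ` (PiE B (\<lambda>_. UNIV)) \<subseteq> vec.span B"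
      using vec.span_finite[OF fB] by auto
    show "vec.span B \<subseteq> ?f ` (PiE B (\<lambda>_. UNIV))"
    proof
      fix x assume "x \<in> vec.span B"
      then obtain u where u: "x = ?f u" using vec.span_finite[OF fB] by auto
      have "x = ?f (restrict u B)" using u by (auto intro: sum.cong)
      moreover have "restrict u B \<in> PiE B (\<lambda>_. UNIV)" by auto
      ultimately show "x \<in> ?f ` (PiE B (\<lambda>_. UNIV))" by blast
    qed
  qed
  have "card (vec.span B) = card (PiE B (\<lambda>_. UNIV::'a set))"
    using card_image[OF inj] img by simp
  also have "\<dots> = CARD('a) ^ card B" by (simp add: card_PiE fB)
  finally show ?thesis .
qed

lemma card_subspace:
  fixes W :: "('a::{finite,field}^'n) set"
  assumes "vec.subspace W"
  shows "card W = CARD('a) ^ vec.dim W"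
proof -
  obtain B where B: "B \<subseteq> W" "vec.independent B" "W \<subseteq> vec.span B" "card B = vec.dim W"
    using vec.basis_exists by blast
  have "vec.span B = W" using vec.span_subspace[OF B(1) B(3) assms] .
  thus ?thesis using card_span_indep[OF B(2)] B(4) by simp
qed

lemma polar_expand:
  "polar A x y = (\<Sum>i\<in>UNIV. \<Sum>j\<in>UNIV. A$i$j * (x$i*y$j + y$i*x$j))"
proof -
  have "polar A x y = (\<Sum>i\<in>UNIV. \<Sum>j\<in>UNIV. A$i$j*(x+y)$i*(x+y)$j - A$i$j*x$i*x$j - A$i$j*y$i*y$j)"
    unfolding polar_def qform_def by (simp add: sum_subtractf)
  also have "\<dots> = (\<Sum>i\<in>UNIV. \<Sum>j\<in>UNIV. A$i$j * (x$i*y$j + y$i*x$j))"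
    by (intro sum.cong refl) (simp add: ring_distribs)
  finally show ?thesis .
qed

lemma polar_sym: "polar A x y = polar A y x"
  unfolding polar_def by (simp add: add.commute)

lemma polar_add2: "polar A x (y + z) = polar A x y + polar A x z"
  unfolding polar_expand sum.distrib[symmetric] by (intro sum.cong refl) (simp add: ring_distribs)

lemma polar_scale2: "polar A x (c *s y) = c * polar A x y"
  unfolding polar_expand sum_distrib_left by (intro sum.cong refl) (simp add: ring_distribs mult_ac)

lemma polar_add1: "polar A (y + z) x = polar A y x + polar A z x"
  by (simp only: polar_sym[of A _ x] polar_add2)

lemma polar_scale1: "polar A (c *s y) x = c * polar A y x"
  by (simp only: polar_sym[of A _ x] polar_scale2)

lemma polar_diff1: "polar A (y - z) x = polar A y x - polar A z x"
  using polar_add1[of A "y - z" z x] by simp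

lemma polar_zero1: "polar A 0 x = 0"
  using polar_scale1[of A 0 x x] by simp

lemma qform_add: "qform A (x + y) = qform A x + qform A y + polar A x y"
  unfolding polar_def by simp

lemma qform_scale: "qform A (c *s x) = c^2 * qform A x"
  unfolding qform_def sum_distrib_left by (intro sum.cong refl) (simp add: power2_eq_square mult_ac)

lemma qform_zero: "qform A 0 = 0"
  unfolding qform_def by simp

lemma level_bound:
  fixes U :: "'b set" and phi :: "'b \<Rightarrow> 'a::{finite,field}"
  assumes fin: "finite U" and a: "a \<noteq> 0"
    and cl: "\<And>u t. u \<in> U \<Longrightarrow> g u t \<in> U"
    and ph: "\<And>u t. u \<in> U \<Longrightarrow> phi (g u t) = phi u + t * a"
    and ginj: "\<And>u u' t. u \<in> U \<Longrightarrow> u' \<in> U \<Longrightarrow> g u t = g u' t \<Longrightarrow> u = u'"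
  shows "card {u\<in>U. phi u = c} * CARD('a) \<le> card U"
proof -
  let ?L = "{u\<in>U. phi u = c}"
  let ?G = "\<lambda>p. g (fst p) (snd p)"
  have inj: "inj_on ?G (?L \<times> UNIV)"
  proof (rule inj_onI)
    fix p p' assume hp: "p \<in> ?L \<times> UNIV" "p' \<in> ?L \<times> UNIV" "?G p = ?G p'"
    have h1: "fst p \<in> U" "phi (fst p) = c" using hp(1) by auto
    have h2: "fst p' \<in> U" "phi (fst p') = c" using hp(2) by auto
    have e1: "phi (?G p) = c + snd p * a" using ph[OF h1(1)] h1(2) by simp
    have e2: "phi (?G p') = c + snd p' * a" using ph[OF h2(1)] h2(2) by simp
    have "c + snd p * a = c + snd p' * a" using e1 e2 hp(3) by metis
    hence st: "snd p = snd p'" using a by simp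
    hence "fst p = fst p'" using ginj[OF h1(1) h2(1)] hp(3) by simp
    thus "p = p'" using st by (simp add: prod_eq_iff)
  qed
  have sub: "?G ` (?L \<times> UNIV) \<subseteq> U" using cl by auto
  have "card (?L \<times> (UNIV::'a set)) \<le> card U"
    using card_inj_on_le[OF inj sub fin] .
  thus ?thesis by (simp add: card_cartesian_product)
qed


lemma polar_zero2: "polar A x 0 = 0"
  using polar_scale2[of A x 0 x] by simp

lemma polar_diff2: "polar A x (y - z) = polar A x y - polar A x z"
  using polar_add2[of A x "y - z" z] by simp

lemma sing_count:
  fixes A :: "'a::{finite,field}^'n^'n"
  assumes K: "vec.subspace K" and UK: "U \<subseteq> K" and Uq: "in_quadric A U"
    and maxU: "\<forall>V. V \<subseteq> K \<and> in_quadric A V \<longrightarrow> vec.dim V \<le> vec.dim U"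
  shows "CARD('a) * card {v\<in>K. qform A v = 0} + CARD('a)^(vec.dim K - vec.dim U)
         \<le> CARD('a)^(vec.dim U + 1) + CARD('a)^(vec.dim K)"
proof -
  let ?q = "CARD('a)"
  define g where "g = vec.dim U"
  define n where "n = vec.dim K"
  define P where "P = {v\<in>K. \<forall>u\<in>U. polar A v u = 0}"
  have Us: "vec.subspace U" and Q0: "\<And>u. u \<in> U \<Longrightarrow> qform A u = 0"
    using Uq unfolding in_quadric_def by auto
  have polU: "polar A u u' = 0" if "u \<in> U" "u' \<in> U" for u u'
    using Q0[OF that(1)] Q0[OF that(2)] Q0[OF vec.subspace_add[OF Us that]]
    unfolding polar_def by simp
  have UP: "U \<subseteq> P" unfolding P_def using UK polU by auto
  have PK: "P \<subseteq> K" unfolding P_def by auto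
  have KP: "w - u \<in> K - P" if "w \<in> K - P" "u \<in> U" for w u
  proof -
    have wK: "w \<in> K" using that by auto
    have "w - u \<in> K" using vec.subspace_diff[OF K wK] UK that(2) by auto
    moreover have "w - u \<notin> P"
    proof
      assume "w - u \<in> P"
      hence "\<forall>u'\<in>U. polar A w u' = 0"
        unfolding P_def using polar_diff1[of A w u] polU that(2) by auto
      thus False using that wK unfolding P_def by auto
    qed
    ultimately show ?thesis by simp
  qed
  have fin: "finite X" for X :: "('a^'n) set" by simp
  have qpos: "?q > 0" by simp
  have cardK: "card K \<le> ?q ^ g * card P"
  proof -
    obtain B where B: "B \<subseteq> U" "vec.independent B" "U \<subseteq> vec.span B" "card B = g"
      using vec.basis_exists unfolding g_def by blast
    have fB: "finite B" by simp
    define L where "L v = restrict (\<lambda>b. polar A v b) B" for v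
    define rep where "rep y = (SOME v. v \<in> K \<and> L v = y)" for y
    define F where "F v = (L v, v - rep (L v))" for v
    have injF: "inj_on F K"
    proof (rule inj_onI)
      fix v w assume "v \<in> K" "w \<in> K" "F v = F w"
      hence "L v = L w" "v - rep (L v) = w - rep (L w)" unfolding F_def by auto
      thus "v = w" by simp
    qed
    have FK: "F ` K \<subseteq> (L ` K) \<times> P"
    proof
      fix x assume "x \<in> F ` K"
      then obtain v where v: "v \<in> K" "x = F v" by auto
      let ?r = "rep (L v)"
      have "\<exists>w. w \<in> K \<and> L w = L v" using v by blast
      hence r: "?r \<in> K" "L ?r = L v" unfolding rep_def by (metis (mono_tags, lifting) someI_ex)+
      have dK: "v - ?r \<in> K" using vec.subspace_diff[OF K v(1) r(1)] .
      define Z where "Z = {u. polar A (v - ?r) u = 0}"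
      have Zs: "vec.subspace Z" unfolding vec.subspace_def Z_def
        by (simp add: polar_zero2 polar_add2 polar_scale2)
      have BZ: "B \<subseteq> Z"
      proof
        fix b assume b: "b \<in> B"
        have "L ?r b = L v b" using r(2) by simp
        hence "polar A ?r b = polar A v b" using b unfolding L_def by simp
        thus "b \<in> Z" unfolding Z_def by (simp add: polar_diff1)
      qed
      have "U \<subseteq> Z" using vec.span_minimal[OF BZ Zs] B(3) by blast
      hence "v - ?r \<in> P" unfolding P_def Z_def using dK by auto
      thus "x \<in> (L ` K) \<times> P" using v unfolding F_def by auto
    qed
    have "card K \<le> card ((L ` K) \<times> P)"
      using card_inj_on_le[OF injF FK] by simp
    also have "\<dots> = card (L ` K) * card P" by (simp add: card_cartesian_product)
    also have "card (L ` K) \<le> card (PiE B (\<lambda>_. UNIV::'a set))"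
    proof (rule card_mono)
      show "finite (PiE B (\<lambda>_. UNIV::'a set))" using fB by (simp add: finite_PiE)
      show "L ` K \<subseteq> PiE B (\<lambda>_. UNIV)" unfolding L_def by auto
    qed
    also have "card (PiE B (\<lambda>_. UNIV::'a set)) = ?q ^ g" using B(4) fB by (simp add: card_PiE)
    finally show ?thesis by (simp add: mult_right_mono)
  qed
  have lev: "card {u\<in>U. qform A (w + u) = 0} * ?q \<le> card U" if w: "w \<in> K - P" for w
  proof -
    obtain u0 where u0: "u0 \<in> U" "polar A w u0 \<noteq> 0" using w unfolding P_def by auto
    show ?thesis
    proof (rule level_bound[where g = "\<lambda>u t. u + t *s u0" and a = "polar A w u0"])
      show "finite U" by simp
      show "polar A w u0 \<noteq> 0" by (rule u0(2))
      show "u + t *s u0 \<in> U" if "u \<in> U" for u t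
        using vec.subspace_add[OF Us that vec.subspace_scale[OF Us u0(1)]] .
      show "u = u'" if "u + t *s u0 = u' + t *s u0" for u u' t using that by simp
      show "qform A (w + (u + t *s u0)) = qform A (w + u) + t * polar A w u0" if "u \<in> U" for u t
      proof -
        have "w + (u + t *s u0) = (w + u) + t *s u0" by (simp add: add.assoc)
        hence "qform A (w + (u + t *s u0)) = qform A (w + u) + qform A (t *s u0) + polar A (w + u) (t *s u0)"
          using qform_add by metis
        also have "qform A (t *s u0) = 0" using Q0[OF u0(1)] by (simp add: qform_scale)
        also have "polar A (w + u) (t *s u0) = t * polar A w u0"
          using polU[OF that u0(1)] by (simp add: polar_scale2 polar_add1 algebra_simps)
        finally show ?thesis by simp
      qed
    qed
  qed
  define T where "T = {v\<in>K - P. qform A v = 0}"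
  have cT: "?q * card T \<le> card (K - P)"
  proof -
    let ?S = "SIGMA w:(K - P). {u\<in>U. qform A (w + u) = 0}"
    have inj: "inj_on (\<lambda>p. (fst p - snd p, snd p)) (T \<times> U)"
      by (rule inj_onI) (auto simp: prod_eq_iff)
    have sub: "(\<lambda>p. (fst p - snd p, snd p)) ` (T \<times> U) \<subseteq> ?S"
    proof
      fix x assume "x \<in> (\<lambda>p. (fst p - snd p, snd p)) ` (T \<times> U)"
      then obtain v u where vu: "v \<in> T" "u \<in> U" "x = (v - u, u)" by auto
      have "v - u \<in> K - P" using KP[of v u] vu unfolding T_def by auto
      moreover have "qform A (v - u + u) = 0" using vu unfolding T_def by simp
      ultimately show "x \<in> ?S" using vu by auto
    qed
    have c1: "card T * card U \<le> card ?S"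
      using card_inj_on_le[OF inj sub] by (simp add: card_cartesian_product)
    have c2: "card ?S = (\<Sum>w\<in>K - P. card {u\<in>U. qform A (w + u) = 0})" by simp
    have c3: "?q * (\<Sum>w\<in>K - P. card {u\<in>U. qform A (w + u) = 0})
        = (\<Sum>w\<in>K - P. card {u\<in>U. qform A (w + u) = 0} * ?q)"
      by (simp only: sum_distrib_left mult.commute)
    have c4: "(\<Sum>w\<in>K - P. card {u\<in>U. qform A (w + u) = 0} * ?q) \<le> (\<Sum>w\<in>K - P. card U)"
      by (rule sum_mono) (rule lev)
    have c5: "(\<Sum>w\<in>K - P. card U) = card (K - P) * card U" by simp
    have c6: "?q * (card T * card U) \<le> ?q * card ?S" using c1 by simp
    have d1: "?q * card ?S = (\<Sum>w\<in>K - P. card {u\<in>U. qform A (w + u) = 0} * ?q)"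
      by (subst c2) (rule c3)
    have d2: "?q * (card T * card U) \<le> card (K - P) * card U"
      using c6 d1 c4 c5 by linarith
    have d3: "(?q * card T) * card U \<le> card (K - P) * card U"
      using d2 by (metis mult.assoc)
    have Une: "U \<noteq> {}" using vec.subspace_0[OF Us] by blast
    have d4: "card U > 0" using Une by (simp add: card_gt_0_iff)
    show ?thesis using d3 d4 mult_le_cancel2 by metis
  qed
  have singP: "v \<in> U" if v: "v \<in> P" "qform A v = 0" for v
  proof (rule ccontr)
    assume nv: "v \<notin> U"
    define V where "V = vec.span (insert v U)"
    have iK: "insert v U \<subseteq> K" using v(1) PK UK by blast
    have VK: "V \<subseteq> K" unfolding V_def using vec.span_minimal[OF iK K] .
    have spU: "vec.span U = U" using Us by simp
    have "in_quadric A V"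
      unfolding in_quadric_def
    proof
      show "vec.subspace V" unfolding V_def by simp
      show "\<forall>x\<in>V. qform A x = 0"
      proof
        fix x assume "x \<in> V"
        then obtain k where k: "x - k *s v \<in> U" unfolding V_def vec.span_insert spU by auto
        define w where "w = x - k *s v"
        have x: "x = w + k *s v" unfolding w_def by simp
        have "polar A w v = 0" using v(1) k unfolding P_def w_def by (simp add: polar_sym[of A _ v])
        hence "qform A x = qform A w + qform A (k *s v)" unfolding x qform_add by (simp add: polar_scale2)
        thus "qform A x = 0" using Q0 k v(2) unfolding w_def by (simp add: qform_scale)
      qed
    qed
    hence "vec.dim V \<le> vec.dim U" using maxU VK by blast
    moreover have "vec.dim V = vec.dim U + 1" unfolding V_def vec.dim_span vec.dim_insert spU using nv by simp
    ultimately show False by simp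
  qed
  have sub: "{v\<in>K. qform A v = 0} \<subseteq> U \<union> T" using singP unfolding T_def by auto
  have cS0: "card {v\<in>K. qform A v = 0} \<le> card (U \<union> T)" by (rule card_mono[OF fin sub])
  have cS: "card {v\<in>K. qform A v = 0} \<le> card U + card T"
    using cS0 card_Un_le[of U T] by linarith
  have cU: "card U = ?q ^ g" unfolding g_def using card_subspace[OF Us] .
  have cKn: "card K = ?q ^ n" unfolding n_def using card_subspace[OF K] .
  have gn: "g \<le> n" unfolding g_def n_def using vec.dim_subset[OF UK] .
  have cKP: "card (K - P) = card K - card P" using PK by (simp add: card_Diff_subset)
  have PleK: "card P \<le> card K" using PK by (simp add: card_mono)
  have e1: "?q ^ g * ?q ^ (n - g) = ?q ^ n" using gn by (simp add: power_add[symmetric])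
  have e2: "?q ^ g * ?q ^ (n - g) \<le> ?q ^ g * card P" using cardK cKn e1 by simp
  have Pge: "?q ^ (n - g) \<le> card P" using e2 by simp
  have e3: "?q * card {v\<in>K. qform A v = 0} \<le> ?q * (card U + card T)"
    using cS by (rule mult_le_mono2)
  have e4: "?q * (card U + card T) = ?q * card U + ?q * card T" by (rule add_mult_distrib2)
  have e5: "?q * card U = ?q ^ (g + 1)" using cU by simp
  have "?q * card {v\<in>K. qform A v = 0} + card P \<le> ?q ^ (g + 1) + card K"
    using e3 e4 e5 cT cKP PleK by linarith
  thus ?thesis using Pge cKn unfolding g_def[symmetric] n_def[symmetric] by linarith
qed


lemma arith_e2:
  fixes q a x cSo Si So SK :: int
  assumes q: "q \<ge> 2" and a: "a \<ge> 1" and x0: "x \<ge> 0"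
    and h_in: "Si + x = x*q*a" and h_out: "So + cSo \<ge> cSo*a" and h_s: "Si + So + 1 \<le> SK"
    and hN: "x + cSo = q*q*a + 1"
    and hK: "q*SK + q*q*a \<le> q*q*a + q*a*q*a*q"
  shows "x \<le> q + 1"
proof -
  have c: "cSo = q*q*a + 1 - x" using hN by simp
  have h1: "cSo * a = q*q*a*a + a - x*a" unfolding c by (simp add: algebra_simps)
  have e1: "q*a*q*a*q = q*(q*q*a*a)" by (simp add: mult_ac)
  have h2: "q*SK \<le> q*(q*q*a*a)" using hK e1 by linarith
  have h3: "SK \<le> q*q*a*a" using h2 q by simp
  have h4: "x*q*a - x*a \<le> q*q*a - a" using h_in h_out h_s h1 h3 c by linarith
  have e2: "(a*(q-1))*x = x*q*a - x*a" by (simp add: algebra_simps)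
  have e3: "(a*(q-1))*(q+1) = q*q*a - a" by (simp add: algebra_simps)
  have h5: "(a*(q-1))*x \<le> (a*(q-1))*(q+1)" using h4 e2 e3 by linarith
  have pos: "a*(q-1) > 0" using q a by simp
  show ?thesis using h5 mult_le_cancel_left_pos[OF pos] by blast
qed

lemma arith_e1:
  fixes q a x cSo Si So SK :: int
  assumes q: "q \<ge> 2" and a: "a \<ge> 1" and x0: "x \<ge> 0"
    and h_in: "Si + x = x*q*a" and h_out: "So + cSo \<ge> cSo*a" and h_s: "Si + So + 1 \<le> SK"
    and hN: "x + cSo = q*a + 1"
    and hK: "q*SK + q*a \<le> q*q*a + q*a*(q*a)"
  shows "x \<le> q + 1"
proof -
  have c: "cSo = q*a + 1 - x" using hN by simp
  have h1: "cSo * a = q*a*a + a - x*a" unfolding c by (simp add: algebra_simps)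
  have e1: "q*q*a + q*a*(q*a) - q*a = q*(q*a + q*a*a - a)" by (simp add: algebra_simps)
  have h2: "q*SK \<le> q*(q*a + q*a*a - a)" using hK e1 by linarith
  have h3: "SK \<le> q*a + q*a*a - a" using h2 q by simp
  have h4: "x*q*a - x*a \<le> 2*q*a - 2*a" using h_in h_out h_s h1 h3 c by linarith
  have e2: "(a*(q-1))*x = x*q*a - x*a" by (simp add: algebra_simps)
  have e3: "(a*(q-1))*2 = 2*q*a - 2*a" by (simp add: algebra_simps)
  have h5: "(a*(q-1))*x \<le> (a*(q-1))*2" using h4 e2 e3 by linarith
  have pos: "a*(q-1) > 0" using q a by simp
  have "x \<le> 2" using h5 mult_le_cancel_left_pos[OF pos] by blast
  thus ?thesis using q by simp
qed


theorem mainTheorem4: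
  fixes A :: "'a::{finite,field}^'n^'n"
    and S :: "('a^'n) set set"
    and K :: "('a^'n) set"
    and r e :: nat
  assumes "e \<in> {1, 2}"
    and "e = 1 \<longrightarrow> even r"
    and "e = 2 \<longrightarrow> odd r"
    and "CARD('n) = r + 3"
    and "is_quadric A UNIV (r + 2) e"
    and "is_spread A (r + 2) e S"
    and "vec.subspace K" and "vec.dim K = r + 2"
    and "is_quadric A K (r + 1) (e - 1)"
  shows "card {U \<in> S. U \<subseteq> K} \<le> CARD('a) + 1"
proof -
  note e12 = assms(1) and Kdim = assms(8) and Ks = assms(7)
  let ?q = "CARD('a)"
  have q2: "?q \<ge> 2"
  proof -
    have "(0::'a) \<noteq> 1" by simp
    hence "card {0::'a, 1} = 2" by simp
    moreover have "card {0::'a, 1} \<le> ?q" by (rule card_mono) auto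
    ultimately show ?thesis by simp
  qed
  define g where "g = (r + 3 - e) div 2"
  have g1: "g \<ge> 1"
  proof (cases "e = 1")
    case True thus ?thesis unfolding g_def by simp
  next
    case False
    hence "e = 2" using e12 by simp
    hence "odd r" using assms(3) by simp
    hence "r \<ge> 1" by (cases r) auto
    thus ?thesis unfolding g_def using \<open>e = 2\<close> by simp
  qed
  obtain U0 where gen0: "generator_on A K U0" and dU0: "vec.dim U0 = (r + 1 + 1 - (e - 1)) div 2"
    using assms(9) unfolding is_quadric_def by blast
  have dU0g: "vec.dim U0 = g" unfolding dU0 g_def using e12 by auto
  have sc: "?q * card {v\<in>K. qform A v = 0} + ?q^(vec.dim K - vec.dim U0)
         \<le> ?q^(vec.dim U0 + 1) + ?q^(vec.dim K)"
    using gen0 unfolding generator_on_def by (intro sing_count[OF Ks]) auto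
  have SKb: "?q * card {v\<in>K. qform A v = 0} + ?q^(r + 2 - g) \<le> ?q^(g + 1) + ?q^(r + 2)"
    using sc unfolding dU0g Kdim .
  obtain U1 where gen1: "generator_on A UNIV U1" and dU1: "vec.dim U1 = (r + 2 + 1 - e) div 2"
    using assms(5) unfolding is_quadric_def by blast
  have dU1g: "vec.dim U1 = g" unfolding dU1 g_def by simp
  have sp: "\<forall>U\<in>S. generator_on A UNIV U" "\<forall>U\<in>S. \<forall>V\<in>S. U \<noteq> V \<longrightarrow> U \<inter> V = {0}"
    "card S = ?q ^ ((r + 2 + e - 1) div 2) + 1"
    using assms(6) unfolding is_spread_def by auto
  have Wprops: "vec.subspace W \<and> (\<forall>v\<in>W. qform A v = 0) \<and> vec.dim W = g" if W: "W \<in> S" for W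
  proof -
    have gw: "generator_on A UNIV W" using sp(1) W by blast
    have "vec.dim U1 \<le> vec.dim W" using gw gen1 unfolding generator_on_def by blast
    moreover have "vec.dim W \<le> vec.dim U1" using gw gen1 unfolding generator_on_def by blast
    ultimately show ?thesis using gw dU1g unfolding generator_on_def in_quadric_def by auto
  qed
  define a where "a = ?q ^ (g - 1)"
  have a1: "a \<ge> 1" unfolding a_def using q2 by simp
  have qg: "?q ^ g = ?q * a" unfolding a_def using g1 by (simp add: power_eq_if)
  define SK where "SK = {v\<in>K. qform A v = 0}"
  define D where "D W = W \<inter> K - {0}" for W
  define Sin where "Sin = {U \<in> S. U \<subseteq> K}"
  define Sout where "Sout = S - Sin"
  have finS: "finite S" using sp(3) card_ge_0_finite by fastforce
  have fin: "finite X" for X :: "('a^'n) set" by simp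
  have cD: "card (D W) + 1 = card (W \<inter> K)" if W: "W \<in> S" for W
  proof -
    have z: "0 \<in> W \<inter> K" using Wprops[OF W] Ks vec.subspace_0 by blast
    have c1: "card (W \<inter> K - {0}) = card (W \<inter> K) - 1" using card_Diff_singleton[OF z] .
    have c2: "card (W \<inter> K) > 0" using z by (simp add: card_gt_0_iff, blast)
    show ?thesis unfolding D_def using c1 c2 by linarith
  qed
  have cWK: "card (W \<inter> K) \<ge> a" if W: "W \<in> S" for W
  proof -
    have Ws: "vec.subspace W" and dW: "vec.dim W = g" using Wprops[OF W] by auto
    have "vec.dim {x + y |x y. x \<in> W \<and> y \<in> K} + vec.dim (W \<inter> K) = vec.dim W + vec.dim K"
      by (rule vec.dim_sums_Int[OF Ws Ks])
    moreover have "vec.dim {x + y |x y. x \<in> W \<and> y \<in> K} \<le> vec.dim (UNIV::('a^'n) set)"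
      by (rule vec.dim_subset) simp
    moreover have "vec.dim (UNIV::('a^'n) set) = r + 3" using vec_dim_card[where 'a='a and 'n='n] assms(4) by simp
    ultimately have "vec.dim (W \<inter> K) \<ge> g - 1" using dW Kdim by linarith
    moreover have "card (W \<inter> K) = ?q ^ vec.dim (W \<inter> K)"
      by (rule card_subspace[OF vec.subspace_inter[OF Ws Ks]])
    ultimately show ?thesis unfolding a_def using q2 by (simp add: power_increasing)
  qed
  have cWin: "card (W \<inter> K) = ?q * a" if W: "W \<in> Sin" for W
  proof -
    have WS: "W \<in> S" and WK: "W \<subseteq> K" using W unfolding Sin_def by auto
    have "W \<inter> K = W" using WK by blast
    thus ?thesis using card_subspace[of W] Wprops[OF WS] qg by simp
  qed
  have disj: "\<forall>W\<in>S. \<forall>V\<in>S. W \<noteq> V \<longrightarrow> D W \<inter> D V = {}"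
    using sp(2) unfolding D_def by blast
  have UD: "(\<Union>W\<in>S. D W) \<subseteq> SK - {0}"
    unfolding D_def SK_def using Wprops by blast
  have sumD: "(\<Sum>W\<in>S. card (D W)) + 1 \<le> card SK"
  proof -
    have "(\<Sum>W\<in>S. card (D W)) = card (\<Union>W\<in>S. D W)"
      using card_UN_disjoint[OF finS _ disj] by simp
    also have "\<dots> \<le> card (SK - {0})" using card_mono[OF fin UD] .
    finally have h: "(\<Sum>W\<in>S. card (D W)) \<le> card (SK - {0})" .
    have "0 \<in> SK" unfolding SK_def using Ks vec.subspace_0 qform_zero by blast
    hence "card (SK - {0}) = card SK - 1" "card SK > 0"
      using card_Diff_singleton[of 0 SK] by (simp_all add: card_gt_0_iff, blast)
    hence "card (SK - {0}) + 1 = card SK" by linarith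
    thus ?thesis using h by linarith
  qed
  have SinS: "Sin \<subseteq> S" unfolding Sin_def by auto
  have splitS: "(\<Sum>W\<in>S. card (D W)) = (\<Sum>W\<in>Sin. card (D W)) + (\<Sum>W\<in>Sout. card (D W))"
    unfolding Sout_def using sum.subset_diff[OF SinS finS, of "\<lambda>W. card (D W)"] by (simp add: add.commute)
  have cardS: "card S = card Sin + card Sout"
    unfolding Sout_def using card_Diff_subset[OF _ SinS] finS SinS
    by (metis card_mono finite_subset le_add_diff_inverse)
  have hin: "(\<Sum>W\<in>Sin. card (D W)) + card Sin = card Sin * ?q * a"
  proof -
    have "(\<Sum>W\<in>Sin. card (D W) + 1) = (\<Sum>W\<in>Sin. ?q * a)"
      by (rule sum.cong[OF refl]) (use cD cWin SinS in auto)
    moreover have "(\<Sum>W\<in>Sin. card (D W) + 1) = (\<Sum>W\<in>Sin. card (D W)) + card Sin"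
      unfolding sum.distrib by simp
    moreover have "(\<Sum>W\<in>Sin. ?q * a) = card Sin * ?q * a" by simp
    ultimately show ?thesis by simp
  qed
  have hout: "(\<Sum>W\<in>Sout. card (D W)) + card Sout \<ge> card Sout * a"
  proof -
    have "(\<Sum>W\<in>Sout. a) \<le> (\<Sum>W\<in>Sout. card (D W) + 1)"
      by (rule sum_mono) (use cD cWK Sout_def in auto)
    moreover have "(\<Sum>W\<in>Sout. card (D W) + 1) = (\<Sum>W\<in>Sout. card (D W)) + card Sout"
      unfolding sum.distrib by simp
    moreover have "(\<Sum>W\<in>Sout. a) = card Sout * a" by simp
    ultimately show ?thesis by simp
  qed
  have xle: "int (card Sin) \<le> int ?q + 1"
  proof (cases "e = 1")
    case True
    hence er: "even r" using assms(2) by simp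
    have gr: "g = (r + 2) div 2" unfolding g_def using True by simp
    have n2: "r + 2 - g = g" using er gr by auto
    have n3: "r + 2 = g + g" using er gr by auto
    have Ng: "(r + 2 + e - 1) div 2 = g" using True gr by simp
    have h1: "?q ^ (r + 2 - g) = ?q * a" using n2 qg by simp
    have h2: "?q ^ (g + 1) = ?q * ?q * a" using qg by simp
    have h3: "?q ^ (r + 2) = ?q * a * (?q * a)" unfolding n3 power_add qg ..
    have K': "?q * card SK + ?q * a \<le> ?q * ?q * a + ?q * a * (?q * a)"
      using SKb unfolding SK_def[symmetric] h1 h2 h3 .
    have N': "card Sin + card Sout = ?q * a + 1" using sp(3) cardS unfolding Ng qg by simp
    show ?thesis
    proof (rule arith_e1[where a = "int a" and cSo = "int (card Sout)"
          and Si = "int (\<Sum>W\<in>Sin. card (D W))" and So = "int (\<Sum>W\<in>Sout. card (D W))"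
          and SK = "int (card SK)"])
      show "int ?q \<ge> 2" using q2 by simp
      show "int a \<ge> 1" using a1 by simp
      show "int (card Sin) \<ge> 0" by simp
      show "int (\<Sum>W\<in>Sin. card (D W)) + int (card Sin) = int (card Sin) * int ?q * int a"
        using arg_cong[where f=int, OF hin] by simp
      show "int (\<Sum>W\<in>Sout. card (D W)) + int (card Sout) \<ge> int (card Sout) * int a"
        using of_nat_le_iff[where 'a=int, THEN iffD2, OF hout] by simp
      show "int (\<Sum>W\<in>Sin. card (D W)) + int (\<Sum>W\<in>Sout. card (D W)) + 1 \<le> int (card SK)"
        using sumD splitS by linarith
      show "int (card Sin) + int (card Sout) = int ?q * int a + 1"
        using arg_cong[where f=int, OF N'] by simp
      show "int ?q * int (card SK) + int ?q * int a \<le> int ?q * int ?q * int a + int ?q * int a * (int ?q * int a)"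
        using of_nat_le_iff[where 'a=int, THEN iffD2, OF K'] by simp
    qed
  next
    case False
    hence E2: "e = 2" using e12 by simp
    hence or: "odd r" using assms(3) by simp
    have gr: "g = (r + 1) div 2" unfolding g_def using E2 by simp
    obtain k where rk: "r = 2 * k + 1" using or oddE by blast
    have gk: "g = k + 1" using gr rk by simp
    have n2: "r + 2 - g = g + 1" using rk gk by simp
    have n3: "r + 2 = g + g + 1" using rk gk by simp
    have Ng: "(r + 2 + e - 1) div 2 = g + 1" using E2 rk gk by simp
    have h1: "?q ^ (r + 2 - g) = ?q * ?q * a" using n2 qg by simp
    have h2: "?q ^ (g + 1) = ?q * ?q * a" using qg by simp
    have h3: "?q ^ (r + 2) = ?q * a * ?q * a * ?q" unfolding n3 power_add qg by simp
    have K': "?q * card SK + ?q * ?q * a \<le> ?q * ?q * a + ?q * a * ?q * a * ?q"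
      using SKb unfolding SK_def[symmetric] h1 h2 h3 .
    have N': "card Sin + card Sout = ?q * ?q * a + 1" using sp(3) cardS unfolding Ng power_add qg
      by (simp add: mult_ac)
    show ?thesis
    proof (rule arith_e2[where a = "int a" and cSo = "int (card Sout)"
          and Si = "int (\<Sum>W\<in>Sin. card (D W))" and So = "int (\<Sum>W\<in>Sout. card (D W))"
          and SK = "int (card SK)"])
      show "int ?q \<ge> 2" using q2 by simp
      show "int a \<ge> 1" using a1 by simp
      show "int (card Sin) \<ge> 0" by simp
      show "int (\<Sum>W\<in>Sin. card (D W)) + int (card Sin) = int (card Sin) * int ?q * int a"
        using arg_cong[where f=int, OF hin] by simp
      show "int (\<Sum>W\<in>Sout. card (D W)) + int (card Sout) \<ge> int (card Sout) * int a"
        using of_nat_le_iff[where 'a=int, THEN iffD2, OF hout] by simp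
      show "int (\<Sum>W\<in>Sin. card (D W)) + int (\<Sum>W\<in>Sout. card (D W)) + 1 \<le> int (card SK)"
        using sumD splitS by linarith
      show "int (card Sin) + int (card Sout) = int ?q * int ?q * int a + 1"
        using arg_cong[where f=int, OF N'] by simp
      show "int ?q * int (card SK) + int ?q * int ?q * int a \<le> int ?q * int ?q * int a + int ?q * int a * int ?q * int a * int ?q"
        using of_nat_le_iff[where 'a=int, THEN iffD2, OF K'] by simp
    qed
  qed
  show ?thesis using xle unfolding Sin_def by simp
qed

end
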